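(* Let $C$ be a matrix satisfying the dominance condition and let $C'$ be a submatrix of $C$ (obtained by selecting a subset of rows and a subset of columns) such that every column of $C'$ contains an entry equal to $1$ and every row of $C'$ contains at most one entry equal to $1$. Then, in each row of $C'$, the sum of the entries different from $1$ is less than $1$.
   Context: A matrix $C_1$ covers $C_2$ if $C_1-C_2$ is entrywise nonnegative. A matrix is columnwise normal if its entries lie in $[0,1]$ and every column has at least one entry equal to $1$. A columnwise normal matrix with $n$ rows satisfies the dominance condition if (a) there is an $n\times n$ submatrix (formed by $n$ of its columns) covering a permutation matrix, and (b) for every $n\times n$ such submatrix covering a permutation matrix, the sum of each row is less than $2$. *)

theory Defs
  imports Complex_Main
begin

text \<open>A matrix with n rows and m columns is represented as a function
  C :: nat => nat => real, where C i j is the entry in row i < n, column j < m.\<close>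

definition columnwise_normal :: "nat \<Rightarrow> nat \<Rightarrow> (nat \<Rightarrow> nat \<Rightarrow> real) \<Rightarrow> bool" where
  "columnwise_normal n m C \<longleftrightarrow>
     (\<forall>i<n. \<forall>j<m. 0 \<le> C i j \<and> C i j \<le> 1) \<and> (\<forall>j<m. \<exists>i<n. C i j = 1)"

definition covers_perm :: "nat \<Rightarrow> (nat \<Rightarrow> nat \<Rightarrow> real) \<Rightarrow> nat set \<Rightarrow> bool" where
  "covers_perm n C T \<longleftrightarrow>
     (\<exists>p. bij_betw p {..<n} T \<and>
          (\<forall>i<n. \<forall>j\<in>T. C i j - (if j = p i then 1 else 0) \<ge> 0))"

definition dominance :: "nat \<Rightarrow> nat \<Rightarrow> (nat \<Rightarrow> nat \<Rightarrow> real) \<Rightarrow> bool" where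
  "dominance n m C \<longleftrightarrow>
     columnwise_normal n m C \<and>
     (\<exists>T. T \<subseteq> {..<m} \<and> card T = n \<and> covers_perm n C T) \<and>
     (\<forall>T. T \<subseteq> {..<m} \<and> card T = n \<and> covers_perm n C T \<longrightarrow>
          (\<forall>i<n. (\<Sum>j\<in>T. C i j) < 2))"

end

theory Submission
  imports Defs
begin

lemma seq_distinct:
  fixes h :: "nat \<Rightarrow> nat" and seq :: "nat \<Rightarrow> nat"
  assumes seq_def: "\<And>k. seq k = (h ^^ k) j"
    and hT: "\<And>x. x \<in> S \<Longrightarrow> h x \<in> T" and hinj: "inj_on h S" and jT: "j \<notin> T"
  shows "a < b \<Longrightarrow> (\<forall>k<b. seq k \<in> S) \<Longrightarrow> seq a \<noteq> seq b"
proof (induction a arbitrary: b)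
  case 0
  then obtain b' where b: "b = Suc b'" by (cases b) auto
  have "seq b = h (seq b')" using b seq_def by simp
  moreover have "seq b' \<in> S" using 0 b by auto
  ultimately have "seq b \<in> T" using hT by simp
  moreover have "seq 0 = j" using seq_def by simp
  ultimately show ?case using jT by auto
next
  case (Suc a)
  then obtain b' where b: "b = Suc b'" by (cases b) auto
  have e1: "seq b = h (seq b')" "seq (Suc a) = h (seq a)" using b seq_def by simp_all
  have "seq b' \<in> S" "seq a \<in> S" using Suc b by auto
  moreover have "seq a \<noteq> seq b'" using Suc b by auto
  ultimately show ?case using e1 hinj unfolding inj_on_def by metis
qed

lemma augment:
  fixes p f :: "nat \<Rightarrow> nat"
  assumes finS: "finite S" and finj: "inj_on f S" and fS: "f ` S \<subseteq> {..<n}"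
    and pb: "bij_betw p {..<n} T" and jS: "j \<in> S" and jT: "j \<notin> T"
  shows "\<exists>p' c. bij_betw p' {..<n} (insert j (T - {c})) \<and> c \<in> T \<and> c \<notin> S \<and>
           (\<forall>r<n. p' r = p r \<or> (\<exists>x\<in>S. r = f x \<and> p' r = x))"
proof -
  define h where "h x = p (f x)" for x
  define seq where "seq k = (h ^^ k) j" for k
  have pinj: "inj_on p {..<n}" and pim: "p ` {..<n} = T" using pb by (auto simp: bij_betw_def)
  have hT: "\<And>x. x \<in> S \<Longrightarrow> h x \<in> T" using fS pim h_def by auto
  have hinj: "inj_on h S"
    unfolding inj_on_def h_def
  proof (intro ballI impI)
    fix x y assume "x \<in> S" "y \<in> S" "p (f x) = p (f y)"
    then have "f x = f y" using pinj fS unfolding inj_on_def by auto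
    then show "x = y" using finj \<open>x \<in> S\<close> \<open>y \<in> S\<close> unfolding inj_on_def by auto
  qed
  have dist: "\<And>a b. a < b \<Longrightarrow> (\<forall>k<b. seq k \<in> S) \<Longrightarrow> seq a \<noteq> seq b"
    using seq_distinct[of seq h j S T] seq_def hT hinj jT by blast
  have seqS: "seq (Suc k) = h (seq k)" for k using seq_def by simp
  have seq0: "seq 0 = j" using seq_def by simp
  have ex: "\<exists>k. seq k \<notin> S"
  proof (rule ccontr)
    assume "\<not> ?thesis"
    then have all: "\<forall>k. seq k \<in> S" by auto
    have "inj seq"
      unfolding inj_on_def
      by (metis all dist linorder_neqE_nat)
    moreover have "range seq \<subseteq> S" using all by auto
    ultimately have "finite (UNIV :: nat set)"
      using finS finite_imageD finite_subset by blast
    then show False by simp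
  qed
  define K where "K = (LEAST k. seq k \<notin> S)"
  have cK: "seq K \<notin> S" unfolding K_def using ex by (metis LeastI)
  have belowK: "\<And>k. k < K \<Longrightarrow> seq k \<in> S" unfolding K_def using not_less_Least by blast
  have Kpos: "K > 0" using cK seq0 jS by (cases K) auto
  then obtain K' where K': "K = Suc K'" by (cases K) auto
  have cT: "seq K \<in> T" using K' seqS belowK hT by auto
  define Q where "Q = seq ` {..<K}"
  have QS: "Q \<subseteq> S" using belowK Q_def by auto
  define p' where "p' r = (if r \<in> f ` Q then the_inv_into S f r else p r)" for r
  have p'Q: "\<And>k. k < K \<Longrightarrow> p' (f (seq k)) = seq k"
    using p'_def Q_def belowK the_inv_into_f_f[OF finj] by auto
  have seqT: "\<And>k. 0 < k \<Longrightarrow> k \<le> K \<Longrightarrow> seq k \<in> T"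
  proof -
    fix k assume "0 < k" "k \<le> K"
    then obtain k' where "k = Suc k'" by (cases k) auto
    then show "seq k \<in> T" using seqS belowK hT \<open>k \<le> K\<close> by auto
  qed
  have seqp: "\<And>k. k < K \<Longrightarrow> seq (Suc k) = p (f (seq k))" using seqS h_def by simp
  have fQn: "\<And>k. k < K \<Longrightarrow> f (seq k) < n" using fS belowK by auto
  define T' where "T' = insert j (T - {seq K})"
  have finT: "finite T" using pb bij_betw_finite by blast
  have cardT: "card T = n" using pb bij_betw_same_card by fastforce
  have cardT': "card T' = n"
    unfolding T'_def using finT jT cT cardT
    by (simp add: card_insert_if) (metis Kpos One_nat_def Suc_pred card_gt_0_iff empty_iff)
  have mixed: "\<And>k r. k < K \<Longrightarrow> r < n \<Longrightarrow> r \<notin> f ` Q \<Longrightarrow> seq k \<noteq> p r"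
  proof
    fix k r assume k: "k < K" and r: "r < n" "r \<notin> f ` Q" and e: "seq k = p r"
    show False
    proof (cases k)
      case 0 then show False using e seq0 jT pim r by auto
    next
      case (Suc k')
      then have "p (f (seq k')) = p r" using e seqp k by auto
      then have "f (seq k') = r" using pinj r fQn k Suc unfolding inj_on_def by auto
      then show False using r Suc k Q_def by auto
    qed
  qed
  have im: "p' ` {..<n} \<subseteq> T'"
  proof
    fix y assume "y \<in> p' ` {..<n}"
    then obtain r where r: "r < n" "y = p' r" by auto
    show "y \<in> T'"
    proof (cases "r \<in> f ` Q")
      case True
      then obtain k where k: "k < K" "r = f (seq k)" using Q_def by auto
      then have y: "y = seq k" using p'Q r by simp
      show ?thesis
      proof (cases k)
        case 0 then show ?thesis using y seq0 T'_def by simp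
      next
        case (Suc k')
        then have "seq k \<in> T" using seqT k by simp
        moreover have "seq k \<noteq> seq K" using dist[of k K] k belowK by auto
        ultimately show ?thesis using y T'_def by simp
      qed
    next
      case False
      then have y: "y = p r" using p'_def r by simp
      have "p r \<noteq> seq K" using mixed[of K' r] K' seqp[of K'] fQn[of K'] pinj r False
        Q_def unfolding inj_on_def by (metis image_eqI lessI lessThan_iff)
      then show ?thesis using y pim r T'_def by auto
    qed
  qed
  have inj: "inj_on p' {..<n}"
    unfolding inj_on_def
  proof (intro ballI impI)
    fix r1 r2 assume r1: "r1 \<in> {..<n}" and r2: "r2 \<in> {..<n}" and e: "p' r1 = p' r2"
    show "r1 = r2"
    proof (cases "r1 \<in> f ` Q"; cases "r2 \<in> f ` Q")
      assume a: "r1 \<in> f ` Q" "r2 \<in> f ` Q"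
      then obtain k1 k2 where "k1 < K" "r1 = f (seq k1)" "k2 < K" "r2 = f (seq k2)"
        using Q_def by auto
      then show ?thesis using e p'Q by auto
    next
      assume a: "r1 \<in> f ` Q" "r2 \<notin> f ` Q"
      then obtain k1 where "k1 < K" "r1 = f (seq k1)" using Q_def by auto
      moreover have "p' r2 = p r2" using a p'_def by simp
      ultimately show ?thesis using e p'Q mixed[of k1 r2] a r2 by auto
    next
      assume a: "r1 \<notin> f ` Q" "r2 \<in> f ` Q"
      then obtain k2 where "k2 < K" "r2 = f (seq k2)" using Q_def by auto
      moreover have "p' r1 = p r1" using a p'_def by simp
      ultimately show ?thesis using e p'Q mixed[of k2 r1] a r1 by auto
    next
      assume a: "r1 \<notin> f ` Q" "r2 \<notin> f ` Q"
      then show ?thesis using e p'_def pinj r1 r2 unfolding inj_on_def by auto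
    qed
  qed
  have "p' ` {..<n} = T'"
    using card_subset_eq[OF _ im] finT T'_def card_image[OF inj] cardT' by auto
  then have "bij_betw p' {..<n} T'" using inj bij_betw_def by blast
  moreover have "\<forall>r<n. p' r = p r \<or> (\<exists>x\<in>S. r = f x \<and> p' r = x)"
  proof (intro allI impI)
    fix r assume "r < n"
    show "p' r = p r \<or> (\<exists>x\<in>S. r = f x \<and> p' r = x)"
    proof (cases "r \<in> f ` Q")
      case True
      then obtain x where "x \<in> Q" "r = f x" by auto
      then show ?thesis using QS p'_def the_inv_into_f_f[OF finj] by auto
    qed (simp add: p'_def)
  qed
  ultimately show ?thesis using T'_def cT cK by blast
qed

theorem lemma4p7:
  fixes n m :: nat and C :: "nat \<Rightarrow> nat \<Rightarrow> real" and R S :: "nat set"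
  assumes "dominance n m C"
    and "R \<subseteq> {..<n}" and "S \<subseteq> {..<m}"
    and "\<forall>j\<in>S. \<exists>i\<in>R. C i j = 1"
    and "\<forall>i\<in>R. card {j\<in>S. C i j = 1} \<le> 1"
  shows "\<forall>i\<in>R. (\<Sum>j\<in>{j\<in>S. C i j \<noteq> 1}. C i j) < 1"
proof -
  have norm: "\<forall>i<n. \<forall>j<m. 0 \<le> C i j \<and> C i j \<le> 1"
    using assms(1) unfolding dominance_def columnwise_normal_def by blast
  obtain T0 where T0: "T0 \<subseteq> {..<m}" "card T0 = n" "covers_perm n C T0"
    using assms(1) unfolding dominance_def by blast
  have dom2: "\<And>T i. T \<subseteq> {..<m} \<Longrightarrow> card T = n \<Longrightarrow> covers_perm n C T \<Longrightarrow> i < n \<Longrightarrow>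
      (\<Sum>j\<in>T. C i j) < 2"
    using assms(1) unfolding dominance_def by blast
  define valid where "valid T p \<longleftrightarrow> T \<subseteq> {..<m} \<and> bij_betw p {..<n} T \<and> (\<forall>r<n. C r (p r) = 1)"
    for T and p :: "nat \<Rightarrow> nat"
  have cov_valid: "\<exists>p. valid T p" if TT: "T \<subseteq> {..<m}" "covers_perm n C T" for T
  proof -
    obtain p where p: "bij_betw p {..<n} T" "\<forall>i<n. \<forall>j\<in>T. C i j - (if j = p i then 1 else 0) \<ge> 0"
      using TT unfolding covers_perm_def by blast
    have "\<forall>r<n. C r (p r) = 1"
    proof (intro allI impI)
      fix r assume r: "r < n"
      have pr: "p r \<in> T" using p(1) r bij_betwE by blast
      then have "C r (p r) \<ge> 1" using p(2) r by force
      moreover have "C r (p r) \<le> 1" using norm r pr TT(1) by auto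
      ultimately show "C r (p r) = 1" by simp
    qed
    then show ?thesis using p TT unfolding valid_def by blast
  qed
  have valid_cov: "covers_perm n C T \<and> card T = n" if "valid T p" for T p
  proof -
    have "\<forall>i<n. \<forall>j\<in>T. C i j - (if j = p i then 1 else 0) \<ge> 0"
      using that norm unfolding valid_def by auto
    moreover have "card T = n" using that unfolding valid_def
      using bij_betw_same_card by fastforce
    ultimately show ?thesis using that unfolding valid_def covers_perm_def by blast
  qed
  obtain f where f: "\<forall>j\<in>S. f j \<in> R \<and> C (f j) j = 1" 
  proof -
    have "\<forall>j\<in>S. \<exists>i. i \<in> R \<and> C i j = 1" using assms(4) by blast
    from bchoice[OF this] show ?thesis using that by blast
  qed
  have finS: "finite S" using assms(3) finite_subset by blast
  have finj: "inj_on f S"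
  proof (rule inj_onI)
    fix x y assume xy: "x \<in> S" "y \<in> S" "f x = f y"
    then have "x \<in> {j\<in>S. C (f x) j = 1}" "y \<in> {j\<in>S. C (f x) j = 1}" using f by auto
    moreover have "card {j\<in>S. C (f x) j = 1} \<le> 1" using assms(5) f xy by blast
    moreover have "finite {j\<in>S. C (f x) j = 1}" using finS by simp
    ultimately show "x = y" using card_le_Suc0_iff_eq[of "{j\<in>S. C (f x) j = 1}"] by simp
  qed
  have fS: "f ` S \<subseteq> {..<n}" using f assms(2) by auto
  have step: "\<exists>T p. valid T p \<and> k \<le> card (T \<inter> S)" if "k \<le> card S" for k
    using that
  proof (induction k)
    case 0
    then show ?case using cov_valid T0 by blast
  next
    case (Suc k)
    then obtain T p where Tp: "valid T p" "k \<le> card (T \<inter> S)" by auto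
    show ?case
    proof (cases "S \<subseteq> T")
      case True
      then have "T \<inter> S = S" by auto
      then show ?thesis using Tp Suc by auto
    next
      case False
      then obtain j where j: "j \<in> S" "j \<notin> T" by auto
      obtain p' c where pc: "bij_betw p' {..<n} (insert j (T - {c}))" "c \<in> T" "c \<notin> S"
        "\<forall>r<n. p' r = p r \<or> (\<exists>x\<in>S. r = f x \<and> p' r = x)"
        using augment[OF finS finj fS _ j] Tp(1) unfolding valid_def by blast
      define T' where "T' = insert j (T - {c})"
      have "valid T' p'"
        unfolding valid_def
      proof (intro conjI allI impI)
        show "T' \<subseteq> {..<m}" using Tp(1) j assms(3) T'_def unfolding valid_def by auto
        show "bij_betw p' {..<n} T'" using pc T'_def by simp
        fix r assume r: "r < n"
        show "C r (p' r) = 1"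
        proof (cases "p' r = p r")
          case True then show ?thesis using Tp(1) r unfolding valid_def by simp
        next
          case False
          then obtain x where "x \<in> S" "r = f x" "p' r = x" using pc(4) r by blast
          then show ?thesis using f by simp
        qed
      qed
      moreover have "T' \<inter> S = insert j (T \<inter> S)" using T'_def pc j by auto
      moreover have "finite (T \<inter> S)" using finS by simp
      moreover have "j \<notin> T \<inter> S" using j by simp
      ultimately have "card (T' \<inter> S) = Suc (card (T \<inter> S))" by simp
      then show ?thesis using Tp(2) \<open>valid T' p'\<close> by (intro exI[of _ T'] exI[of _ p']) simp
    qed
  qed
  obtain T p where Tp: "valid T p" "card S \<le> card (T \<inter> S)" using step by blast
  have "T \<inter> S = S"
  proof (rule card_subset_eq[OF finS])
    show "T \<inter> S \<subseteq> S" by blast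
    then have "card (T \<inter> S) \<le> card S" using card_mono[OF finS] by blast
    then show "card (T \<inter> S) = card S" using Tp(2) by simp
  qed
  then have ST: "S \<subseteq> T" by auto
  have Tm: "T \<subseteq> {..<m}" using Tp unfolding valid_def by simp
  have finT: "finite T" using Tm finite_subset by blast
  show ?thesis
  proof
    fix i assume i: "i \<in> R"
    have iN: "i < n" using i assms(2) by auto
    define X where "X = {j\<in>S. C i j \<noteq> 1}"
    have pi: "p i \<in> T" "C i (p i) = 1" using Tp(1) iN unfolding valid_def
      by (auto dest: bij_betwE)
    have piX: "p i \<notin> X" using pi X_def by simp
    have finX: "finite X" using finS X_def by simp
    have sub: "insert (p i) X \<subseteq> T" using pi ST X_def by auto
    have "1 + (\<Sum>j\<in>X. C i j) = (\<Sum>j\<in>insert (p i) X. C i j)"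
      using piX finX pi by simp
    also have "\<dots> \<le> (\<Sum>j\<in>T. C i j)"
      by (rule sum_mono2[OF finT sub]) (use norm iN Tm in auto)
    also have "\<dots> < 2" using dom2[OF Tm _ _ iN] valid_cov[OF Tp(1)] by blast
    finally show "(\<Sum>j\<in>{j\<in>S. C i j \<noteq> 1}. C i j) < 1" using X_def by simp
  qed
qed

end
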